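(* Let $X$ be any set and let $X_d$ denote $X$ with the discrete topology. Then: (1) $2^{X_d}_{SL}$ is an Alexandroff $T_0$-space. (2) For every $C\in 2^X$, the minimal open neighbourhood of $C$ in $2^{X_d}_{SL}$ is $\bigcap_{c\in C}L_{\{c\}}=\{D\in 2^X \mid C\subseteq D\}$. (3) The partial order on $2^X$ associated to the Alexandroff $T_0$-space $2^{X_d}_{SL}$ is given by $C\geq D$ if and only if $C\subseteq D$. (4) The identity map $I:2^{X_d}_{SL}\to 2^{X_d}_L$ is continuous, and its inverse $I^{-1}:2^{X_d}_L\to 2^{X_d}_{SL}$ is continuous at a point $C\in 2^X$ if and only if $C$ is a finite set. (5) The Alexandroff $T_0$-topology on $2^X$ associated to the opposite partial order (i.e. $C\geq D$ iff $D\subseteq C$) is exactly the upper semifinite topology, so the resulting space is $2^{X_d}_U$.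
   Context: $2^X$ denotes the set of all non-empty subsets of $X$ (all of which are closed in the discrete space $X_d$). For $U\subseteq X$ put $L_U=\{F\subseteq X\mid F\neq\emptyset,\ F\cap U\neq\emptyset\}$. The lower semifinite topology on $2^X$ is generated by the subbase $\{L_U\mid U\subseteq X\}$; the space is denoted $2^{X_d}_L$. The strong lower semifinite topology on $2^X$ is the topology generated by the family $SL=\{\bigcap_{i\in I}L_{U_i}\mid I \text{ any index set with } \mathrm{Card}(I)\le\mathrm{Card}(X),\ U_i\subseteq X\}$; the space is denoted $2^{X_d}_{SL}$. The upper semifinite topology on $2^X$ is the topology with base $\{\{F\in 2^X\mid F\subseteq U\}\mid U\subseteq X\}$; the space is denoted $2^{X_d}_U$. An Alexandroff space is a topological space in which arbitrary intersections of open sets are open; each point $x$ then has a minimal open neighbourhood $U_x$. For an Alexandroff $T_0$-space the associated partial order is $y\le x$ iff $y\in U_x$ (so $U_x=\{y\mid y\le x\}$); conversely a partial order determines the Alexandroff $T_0$-topology whose open sets are the down-sets. *)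

theory Defs
  imports "HOL-Analysis.Analysis"
begin

text \<open>The hyperspace 2^X: all non-empty subsets of X (all closed in the discrete space X_d).\<close>
definition nonempty_subsets :: "'a set \<Rightarrow> 'a set set" where
  "nonempty_subsets X = {F. F \<subseteq> X \<and> F \<noteq> {}}"

definition lowerL :: "'a set \<Rightarrow> 'a set \<Rightarrow> 'a set set" where
  "lowerL X U = {F \<in> nonempty_subsets X. F \<inter> U \<noteq> {}}"

text \<open>Lower semifinite topology on 2^X (X discrete): generated by the subbase {L_U | U subset X}.\<close>
definition lower_semifinite :: "'a set \<Rightarrow> 'a set topology" where
  "lower_semifinite X = topology_generated_by {lowerL X U | U. U \<subseteq> X}"

text \<open>The index set is taken inside the type of X (any index set of cardinality at most Card(X)
  can be renamed into such a set).\<close>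
definition SL_family :: "'a set \<Rightarrow> 'a set set set" where
  "SL_family X = {nonempty_subsets X \<inter> (\<Inter>i\<in>I. lowerL X (U i)) | (I :: 'a set) U.
                    (card_of I, card_of X) \<in> ordLeq \<and> (\<forall>i\<in>I. U i \<subseteq> X)}"

definition strong_lower_semifinite :: "'a set \<Rightarrow> 'a set topology" where
  "strong_lower_semifinite X = topology_generated_by (SL_family X)"

text \<open>Upper semifinite topology on 2^X (X discrete): base {{F in 2^X | F subset U} | U subset X}.\<close>
definition upper_semifinite :: "'a set \<Rightarrow> 'a set topology" where
  "upper_semifinite X = topology_generated_by {{F \<in> nonempty_subsets X. F \<subseteq> U} | U. U \<subseteq> X}"

definition alexandroff_space :: "'a topology \<Rightarrow> bool" where
  "alexandroff_space T \<longleftrightarrow>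
     (\<forall>\<U>. (\<forall>U\<in>\<U>. openin T U) \<longrightarrow> openin T (topspace T \<inter> \<Inter>\<U>))"

definition min_open_nbhd :: "'a topology \<Rightarrow> 'a \<Rightarrow> 'a set" where
  "min_open_nbhd T x = topspace T \<inter> \<Inter>{U. openin T U \<and> x \<in> U}"

definition alex_le :: "'a topology \<Rightarrow> 'a \<Rightarrow> 'a \<Rightarrow> bool" where
  "alex_le T y x \<longleftrightarrow> y \<in> min_open_nbhd T x"

definition alex_topology :: "'a set \<Rightarrow> ('a \<Rightarrow> 'a \<Rightarrow> bool) \<Rightarrow> 'a topology" where
  "alex_topology S le = topology (\<lambda>A. A \<subseteq> S \<and> (\<forall>x\<in>A. \<forall>y\<in>S. le y x \<longrightarrow> y \<in> A))"

definition continuous_at_point :: "'a topology \<Rightarrow> 'b topology \<Rightarrow> ('a \<Rightarrow> 'b) \<Rightarrow> 'a \<Rightarrow> bool" where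
  "continuous_at_point T S f x \<longleftrightarrow>
     f x \<in> topspace S \<and>
     (\<forall>V. openin S V \<and> f x \<in> V \<longrightarrow> (\<exists>U. openin T U \<and> x \<in> U \<and> f ` U \<subseteq> V))"

end

theory Submission
  imports Defs
begin

definition upset :: "'a set \<Rightarrow> 'a set set \<Rightarrow> bool" where
  "upset X W \<longleftrightarrow> W \<subseteq> nonempty_subsets X \<and> (\<forall>C\<in>W. \<forall>D\<in>nonempty_subsets X. C \<subseteq> D \<longrightarrow> D \<in> W)"

definition downset :: "'a set \<Rightarrow> 'a set set \<Rightarrow> bool" where
  "downset X W \<longleftrightarrow> W \<subseteq> nonempty_subsets X \<and> (\<forall>C\<in>W. \<forall>D\<in>nonempty_subsets X. D \<subseteq> C \<longrightarrow> D \<in> W)"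

definition fdet :: "'a set \<Rightarrow> 'a set set \<Rightarrow> bool" where
  "fdet X W \<longleftrightarrow> W \<subseteq> nonempty_subsets X \<and>
     (\<forall>C\<in>W. \<exists>F. finite F \<and> F \<subseteq> C \<and> (\<forall>D\<in>nonempty_subsets X. F \<subseteq> D \<longrightarrow> D \<in> W))"

definition NB :: "'a set \<Rightarrow> 'a set \<Rightarrow> 'a set set" where
  "NB X C = {D \<in> nonempty_subsets X. C \<subseteq> D}"

lemma NB_eq: "C \<subseteq> X \<Longrightarrow> C \<noteq> {} \<Longrightarrow> NB X C = nonempty_subsets X \<inter> (\<Inter>c\<in>C. lowerL X {c})"
  unfolding NB_def lowerL_def by auto

lemma NB_SL: assumes "C \<subseteq> X" shows "NB X C \<in> SL_family X"
proof -
  have e: "NB X C = nonempty_subsets X \<inter> (\<Inter>c\<in>C. lowerL X ((\<lambda>c. {c}) c))"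
    using assms unfolding NB_def lowerL_def by auto
  have o: "(card_of C, card_of X) \<in> ordLeq" using card_of_mono1[OF assms] .
  have u: "\<forall>i\<in>C. (\<lambda>c. {c}) i \<subseteq> X" using assms by auto
  show ?thesis unfolding SL_family_def mem_Collect_eq
    by (rule exI[of _ C], rule exI[of _ "\<lambda>c. {c}"], intro conjI e o u)
qed

lemma SL_top: "\<Union>(SL_family X) = nonempty_subsets X"
proof -
  have "nonempty_subsets X \<in> SL_family X"
    using NB_SL[of "{}" X] by (simp add: NB_def)
  moreover have "\<forall>A\<in>SL_family X. A \<subseteq> nonempty_subsets X" unfolding SL_family_def by auto
  ultimately show ?thesis by blast
qed

lemma SL_open: "openin (strong_lower_semifinite X) W \<longleftrightarrow> upset X W"
proof
  assume "openin (strong_lower_semifinite X) W"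
  then have "generate_topology_on (SL_family X) W"
    unfolding strong_lower_semifinite_def by (simp add: openin_topology_generated_by_iff)
  then show "upset X W"
  proof (induction rule: generate_topology_on.induct)
    case Empty then show ?case by (simp add: upset_def)
  next
    case (Int a b) then show ?case unfolding upset_def by blast
  next
    case (UN K) then show ?case unfolding upset_def by blast
  next
    case (Basis s) then show ?case unfolding upset_def SL_family_def lowerL_def by blast
  qed
next
  assume u: "upset X W"
  have eq: "W = \<Union>(NB X ` W)" using u unfolding upset_def NB_def by auto
  have "generate_topology_on (SL_family X) (\<Union>(NB X ` W))"
  proof (rule generate_topology_on.UN)
    fix k assume "k \<in> NB X ` W"
    then obtain C where "C \<in> W" "k = NB X C" by auto
    then have "C \<subseteq> X" using u unfolding upset_def nonempty_subsets_def by auto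
    then show "generate_topology_on (SL_family X) k"
      using \<open>k = NB X C\<close> NB_SL by (metis generate_topology_on.Basis)
  qed
  then show "openin (strong_lower_semifinite X) W"
    unfolding strong_lower_semifinite_def using eq by (simp add: openin_topology_generated_by_iff)
qed

lemma L_top: "\<Union>{lowerL X U | U. U \<subseteq> X} = nonempty_subsets X"
  unfolding lowerL_def nonempty_subsets_def by auto

lemma L_open_fdet: "openin (lower_semifinite X) W \<Longrightarrow> fdet X W"
proof -
  assume "openin (lower_semifinite X) W"
  then have "generate_topology_on {lowerL X U | U. U \<subseteq> X} W"
    unfolding lower_semifinite_def by (simp add: openin_topology_generated_by_iff)
  then show "fdet X W"
  proof (induction rule: generate_topology_on.induct)
    case Empty then show ?case by (simp add: fdet_def)
  next
    case (Int a b)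
    show ?case unfolding fdet_def
    proof (intro conjI ballI)
      show "a \<inter> b \<subseteq> nonempty_subsets X" using Int.IH unfolding fdet_def by blast
      fix C assume "C \<in> a \<inter> b"
      then obtain F1 F2 where "finite F1" "F1 \<subseteq> C" "\<forall>D\<in>nonempty_subsets X. F1 \<subseteq> D \<longrightarrow> D \<in> a"
        "finite F2" "F2 \<subseteq> C" "\<forall>D\<in>nonempty_subsets X. F2 \<subseteq> D \<longrightarrow> D \<in> b"
        using Int.IH unfolding fdet_def by (metis IntD1 IntD2)
      then show "\<exists>F. finite F \<and> F \<subseteq> C \<and> (\<forall>D\<in>nonempty_subsets X. F \<subseteq> D \<longrightarrow> D \<in> a \<inter> b)"
        by (intro exI[of _ "F1 \<union> F2"]) auto
    qed
  next
    case (UN K)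
    show ?case unfolding fdet_def
    proof (intro conjI ballI)
      show "\<Union>K \<subseteq> nonempty_subsets X" using UN.IH unfolding fdet_def by blast
      fix C assume "C \<in> \<Union>K"
      then obtain k where k: "k \<in> K" "C \<in> k" by blast
      then obtain F where "finite F" "F \<subseteq> C" "\<forall>D\<in>nonempty_subsets X. F \<subseteq> D \<longrightarrow> D \<in> k"
        using UN.IH[OF k(1)] unfolding fdet_def by blast
      then show "\<exists>F. finite F \<and> F \<subseteq> C \<and> (\<forall>D\<in>nonempty_subsets X. F \<subseteq> D \<longrightarrow> D \<in> \<Union>K)"
        using k by blast
    qed
  next
    case (Basis s)
    then obtain U where s: "s = lowerL X U" by auto
    show ?case unfolding fdet_def
    proof (intro conjI ballI)
      show "s \<subseteq> nonempty_subsets X" using s by (auto simp: lowerL_def)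
      fix C assume "C \<in> s"
      then obtain c where "c \<in> C" "c \<in> U" using s by (auto simp: lowerL_def)
      then show "\<exists>F. finite F \<and> F \<subseteq> C \<and> (\<forall>D\<in>nonempty_subsets X. F \<subseteq> D \<longrightarrow> D \<in> s)"
        using s by (intro exI[of _ "{c}"]) (auto simp: lowerL_def)
    qed
  qed
qed

lemma fdet_upset: "fdet X W \<Longrightarrow> upset X W"
  unfolding fdet_def upset_def by blast

lemma L_NB_open: assumes "finite C" "C \<subseteq> X" shows "openin (lower_semifinite X) (NB X C)"
proof -
  have "generate_topology_on {lowerL X U | U. U \<subseteq> X} (NB X C)"
    using assms
  proof (induction C rule: finite_induct)
    case empty
    have "NB X {} = lowerL X X" unfolding NB_def lowerL_def nonempty_subsets_def by auto
    moreover have "generate_topology_on {lowerL X U | U. U \<subseteq> X} (lowerL X X)"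
      by (rule generate_topology_on.Basis, rule CollectI, rule exI[of _ X], simp)
    ultimately show ?case by simp
  next
    case (insert c F)
    have "NB X (insert c F) = NB X F \<inter> lowerL X {c}" unfolding NB_def lowerL_def by auto
    moreover have "generate_topology_on {lowerL X U | U. U \<subseteq> X} (lowerL X {c})"
      using insert by (intro generate_topology_on.Basis CollectI exI[of _ "{c}"]) simp
    moreover have "generate_topology_on {lowerL X U | U. U \<subseteq> X} (NB X F)" using insert by simp
    ultimately show ?case by (simp add: generate_topology_on.Int)
  qed
  then show ?thesis unfolding lower_semifinite_def by (simp add: openin_topology_generated_by_iff)
qed

lemma istop_down: "istopology (\<lambda>A. A \<subseteq> S \<and> (\<forall>x\<in>A. \<forall>y\<in>S. le y x \<longrightarrow> y \<in> A))"
  unfolding istopology_def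
  apply (rule conjI)
   apply (intro allI impI)
   apply (simp only: Int_iff subset_iff Ball_def) apply blast
  apply (intro allI impI)
  apply (simp only: Union_iff subset_iff Ball_def) apply blast
  done

lemma alex_open: "openin (alex_topology S le) A \<longleftrightarrow> A \<subseteq> S \<and> (\<forall>x\<in>A. \<forall>y\<in>S. le y x \<longrightarrow> y \<in> A)"
  unfolding alex_topology_def topology_inverse'[OF istop_down] ..

lemma U_open: "openin (upper_semifinite X) W \<longleftrightarrow> downset X W"
proof
  assume "openin (upper_semifinite X) W"
  then have "generate_topology_on {{F \<in> nonempty_subsets X. F \<subseteq> U} | U. U \<subseteq> X} W"
    unfolding upper_semifinite_def by (simp add: openin_topology_generated_by_iff)
  then show "downset X W"
  proof (induction rule: generate_topology_on.induct)
    case Empty then show ?case by (simp add: downset_def)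
  next
    case (Int a b) then show ?case unfolding downset_def by blast
  next
    case (UN K) then show ?case unfolding downset_def by blast
  next
    case (Basis s) then show ?case unfolding downset_def by blast
  qed
next
  assume u: "downset X W"
  have eq: "W = \<Union>((\<lambda>C. {F \<in> nonempty_subsets X. F \<subseteq> C}) ` W)" using u unfolding downset_def by auto
  have "generate_topology_on {{F \<in> nonempty_subsets X. F \<subseteq> U} | U. U \<subseteq> X}
          (\<Union>((\<lambda>C. {F \<in> nonempty_subsets X. F \<subseteq> C}) ` W))"
  proof (rule generate_topology_on.UN)
    fix k assume "k \<in> (\<lambda>C. {F \<in> nonempty_subsets X. F \<subseteq> C}) ` W"
    then obtain C where "C \<in> W" "k = {F \<in> nonempty_subsets X. F \<subseteq> C}" by auto
    moreover then have "C \<subseteq> X" using u unfolding downset_def nonempty_subsets_def by auto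
    ultimately show "generate_topology_on {{F \<in> nonempty_subsets X. F \<subseteq> U} | U. U \<subseteq> X} k"
      by (intro generate_topology_on.Basis) auto
  qed
  then show "openin (upper_semifinite X) W"
    unfolding upper_semifinite_def using eq by (simp add: openin_topology_generated_by_iff)
qed

lemma topSL: "topspace (strong_lower_semifinite X) = nonempty_subsets X"
  unfolding strong_lower_semifinite_def using SL_top by simp

lemma topL: "topspace (lower_semifinite X) = nonempty_subsets X"
  unfolding lower_semifinite_def using L_top by simp

lemma NB_upset: "upset X (NB X C)" unfolding upset_def NB_def by auto

lemma minSL: "C \<in> nonempty_subsets X \<Longrightarrow> min_open_nbhd (strong_lower_semifinite X) C = NB X C"
proof -
  assume C: "C \<in> nonempty_subsets X"
  have "NB X C \<in> {U. openin (strong_lower_semifinite X) U \<and> C \<in> U}"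
    using C NB_upset SL_open by (auto simp: NB_def)
  moreover have "\<And>U. upset X U \<Longrightarrow> C \<in> U \<Longrightarrow> NB X C \<subseteq> U" unfolding upset_def NB_def by auto
  ultimately show ?thesis unfolding min_open_nbhd_def topSL SL_open
    by (auto simp: NB_def)
qed

lemma alexSL: "C \<in> nonempty_subsets X \<Longrightarrow> alex_le (strong_lower_semifinite X) D C \<longleftrightarrow> D \<in> nonempty_subsets X \<and> C \<subseteq> D"
  unfolding alex_le_def using minSL by (auto simp: NB_def)


lemma p_alex: "alexandroff_space (strong_lower_semifinite X)"
  unfolding alexandroff_space_def SL_open topSL upset_def by blast

lemma p_t0: "t0_space (strong_lower_semifinite X)"
  unfolding t0_space_def topSL
proof (intro ballI impI)
  fix x y assume xy: "x \<in> nonempty_subsets X" "y \<in> nonempty_subsets X" "x \<noteq> y"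
  show "\<exists>U. openin (strong_lower_semifinite X) U \<and> (x \<notin> U) = (y \<in> U)"
  proof (cases "x \<subseteq> y")
    case True
    then have "\<not> y \<subseteq> x" using xy by auto
    moreover have "openin (strong_lower_semifinite X) (NB X y)" using NB_upset SL_open by blast
    ultimately show ?thesis using xy by (intro exI[of _ "NB X y"]) (auto simp: NB_def)
  next
    case False
    moreover have "openin (strong_lower_semifinite X) (NB X x)" using NB_upset SL_open by blast
    ultimately show ?thesis using xy by (intro exI[of _ "NB X x"]) (auto simp: NB_def)
  qed
qed

lemma p_min: "\<forall>C\<in>nonempty_subsets X.
          min_open_nbhd (strong_lower_semifinite X) C = nonempty_subsets X \<inter> (\<Inter>c\<in>C. lowerL X {c})
        \<and> min_open_nbhd (strong_lower_semifinite X) C = {D \<in> nonempty_subsets X. C \<subseteq> D}"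
proof
  fix C assume C: "C \<in> nonempty_subsets X"
  then have "C \<subseteq> X" "C \<noteq> {}" unfolding nonempty_subsets_def by auto
  then show "min_open_nbhd (strong_lower_semifinite X) C = nonempty_subsets X \<inter> (\<Inter>c\<in>C. lowerL X {c})
        \<and> min_open_nbhd (strong_lower_semifinite X) C = {D \<in> nonempty_subsets X. C \<subseteq> D}"
    using minSL[OF C] NB_eq[of C X] by (simp add: NB_def)
qed

lemma p_le: "\<forall>C\<in>nonempty_subsets X. \<forall>D\<in>nonempty_subsets X.
          alex_le (strong_lower_semifinite X) D C \<longleftrightarrow> C \<subseteq> D"
  using alexSL by blast

lemma p_cont: "continuous_map (strong_lower_semifinite X) (lower_semifinite X) id"
  unfolding continuous_map_def topSL topL
proof (intro conjI allI impI)
  show "id \<in> nonempty_subsets X \<rightarrow> nonempty_subsets X" by auto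
  fix U assume "openin (lower_semifinite X) U"
  then have u: "upset X U" using L_open_fdet fdet_upset by blast
  then have "{x \<in> nonempty_subsets X. id x \<in> U} = U" unfolding upset_def by auto
  then show "openin (strong_lower_semifinite X) {x \<in> nonempty_subsets X. id x \<in> U}"
    by (simp add: SL_open u)
qed

lemma p_cat: "\<forall>C\<in>nonempty_subsets X.
          continuous_at_point (lower_semifinite X) (strong_lower_semifinite X) id C \<longleftrightarrow> finite C"
proof (intro ballI iffI)
  fix C assume C: "C \<in> nonempty_subsets X"
    and ca: "continuous_at_point (lower_semifinite X) (strong_lower_semifinite X) id C"
  have "openin (strong_lower_semifinite X) (NB X C)" using NB_upset SL_open by blast
  moreover have "id C \<in> NB X C" using C by (simp add: NB_def)
  ultimately obtain U where U: "openin (lower_semifinite X) U" "C \<in> U" "id ` U \<subseteq> NB X C"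
    using ca unfolding continuous_at_point_def by meson
  then have "fdet X U" using L_open_fdet by blast
  then obtain F where F: "finite F" "F \<subseteq> C" "\<forall>D\<in>nonempty_subsets X. F \<subseteq> D \<longrightarrow> D \<in> U"
    using U(2) unfolding fdet_def by blast
  obtain c where c: "c \<in> C" using C unfolding nonempty_subsets_def by auto
  have "insert c F \<in> nonempty_subsets X" using F c C unfolding nonempty_subsets_def by auto
  then have "insert c F \<in> U" using F by blast
  then have "insert c F \<in> NB X C" using U(3) by auto
  then have "C \<subseteq> insert c F" unfolding NB_def by auto
  then show "finite C" using F(1) finite_subset by blast
next
  fix C assume C: "C \<in> nonempty_subsets X" and fin: "finite C"
  show "continuous_at_point (lower_semifinite X) (strong_lower_semifinite X) id C"
    unfolding continuous_at_point_def
  proof (intro conjI allI impI)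
    show "id C \<in> topspace (strong_lower_semifinite X)" using C by (simp add: topSL)
    fix V assume V: "openin (strong_lower_semifinite X) V \<and> id C \<in> V"
    then have "upset X V" using SL_open by blast
    then have "NB X C \<subseteq> V" using V unfolding upset_def NB_def by auto
    moreover have "C \<subseteq> X" using C unfolding nonempty_subsets_def by auto
    then have "openin (lower_semifinite X) (NB X C)" using L_NB_open fin by blast
    moreover have "C \<in> NB X C" using C by (simp add: NB_def)
    ultimately show "\<exists>U. openin (lower_semifinite X) U \<and> C \<in> U \<and> id ` U \<subseteq> V" by auto
  qed
qed

lemma p_U1: "alex_topology (nonempty_subsets X) (\<lambda>D C. D \<subseteq> C) = upper_semifinite X"
  unfolding topology_eq alex_open U_open downset_def by blast

lemma p_U2: "alex_topology (nonempty_subsets X) (\<lambda>D C. alex_le (strong_lower_semifinite X) C D)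
        = upper_semifinite X"
proof -
  have "alex_topology (nonempty_subsets X) (\<lambda>D C. alex_le (strong_lower_semifinite X) C D)
     = alex_topology (nonempty_subsets X) (\<lambda>D C. D \<subseteq> C)"
    unfolding topology_eq alex_open
  proof (intro allI)
    fix A
    have "\<And>x y. x \<in> nonempty_subsets X \<Longrightarrow> y \<in> nonempty_subsets X \<Longrightarrow>
          alex_le (strong_lower_semifinite X) x y \<longleftrightarrow> y \<subseteq> x"
      using alexSL by blast
    then show "(A \<subseteq> nonempty_subsets X \<and> (\<forall>x\<in>A. \<forall>y\<in>nonempty_subsets X. alex_le (strong_lower_semifinite X) x y \<longrightarrow> y \<in> A)) =
          (A \<subseteq> nonempty_subsets X \<and> (\<forall>x\<in>A. \<forall>y\<in>nonempty_subsets X. y \<subseteq> x \<longrightarrow> y \<in> A))"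
      by blast
  qed
  then show ?thesis using p_U1 by simp
qed

theorem mainTheorem3:
  fixes X :: "'a set"
  shows "topspace (strong_lower_semifinite X) = nonempty_subsets X
    \<and> alexandroff_space (strong_lower_semifinite X) \<and> t0_space (strong_lower_semifinite X)
    \<and> (\<forall>C\<in>nonempty_subsets X.
          min_open_nbhd (strong_lower_semifinite X) C = nonempty_subsets X \<inter> (\<Inter>c\<in>C. lowerL X {c})
        \<and> min_open_nbhd (strong_lower_semifinite X) C = {D \<in> nonempty_subsets X. C \<subseteq> D})
    \<and> (\<forall>C\<in>nonempty_subsets X. \<forall>D\<in>nonempty_subsets X.
          alex_le (strong_lower_semifinite X) D C \<longleftrightarrow> C \<subseteq> D)
    \<and> continuous_map (strong_lower_semifinite X) (lower_semifinite X) id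
    \<and> (\<forall>C\<in>nonempty_subsets X.
          continuous_at_point (lower_semifinite X) (strong_lower_semifinite X) id C \<longleftrightarrow> finite C)
    \<and> alex_topology (nonempty_subsets X) (\<lambda>D C. D \<subseteq> C) = upper_semifinite X
    \<and> alex_topology (nonempty_subsets X) (\<lambda>D C. alex_le (strong_lower_semifinite X) C D)
        = upper_semifinite X"
  by (intro conjI topSL p_alex p_t0 p_min p_le p_cont p_cat p_U1 p_U2)

end
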